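(* Let $(E\to M,\rho,\langle\cdot,\cdot\rangle,\circ)$ be a Courant algebroid and $(\mathbf I,\mathbf J,\mathbf K)$ an almost hypercomplex structure on $E$. If there exists a hypercomplex connection $\nabla$ satisfying $\nabla\mathbf I=\nabla\mathbf J=\nabla\mathbf K=0$ and, for all $X,Y\in\Gamma(E)$, $$T(X,Y)=\mathbf ID\langle X,\mathbf IY\rangle+\mathbf JD\langle X,\mathbf JY\rangle+\mathbf KD\langle X,\mathbf KY\rangle,$$ then $N_{\mathbf I,\mathbf J}=0$.
   Context: A Courant algebroid $(E\to M,\rho,\langle\cdot,\cdot\rangle,\circ)$ consists of a real vector bundle $E\to M$ over a smooth manifold, a nondegenerate symmetric fiberwise bilinear pairing $\langle\cdot,\cdot\rangle$ on $E$, a vector bundle map $\rho:E\to TM$ (the anchor), and an $\mathbb R$-bilinear operation $\circ$ on $\Gamma(E)$ (the Dorfman bracket) such that for all $f\in C^\infty(M)$, $x,y,z\in\Gamma(E)$: $x\circ(y\circ z)=(x\circ y)\circ z+y\circ(x\circ z)$; $\rho(x\circ y)=[\rho(x),\rho(y)]$; $x\circ(fy)=(\rho(x)f)y+f(x\circ y)$; $x\circ y+y\circ x=2D\langle x,y\rangle$; $(Df)\circ x=0$; $\rho(x)\langle y,z\rangle=\langle x\circ y,z\rangle+\langle y,x\circ z\rangle$. Here $D:C^\infty(M)\to\Gamma(E)$ is the $\mathbb R$-linear map defined by $\langle Df,x\rangle=\tfrac12\rho(x)f$. The Courant bracket is $[\![x,y]\!]=\tfrac12(x\circ y-y\circ x)$.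 For vector bundle endomorphisms $F,G$ of $E$ (over $\mathrm{id}_M$), the Nijenhuis concomitant is the tensor $N_{F,G}:E\otimes E\to E$ given by $N_{F,G}(X,Y)=FX\circ GY-F(X\circ GY)-G(FX\circ Y)+FG(X\circ Y)+GX\circ FY-G(X\circ FY)-F(GX\circ Y)+GF(X\circ Y)$. An almost hypercomplex structure on $E$ is a triple $(\mathbf I,\mathbf J,\mathbf K)$ of vector bundle endomorphisms of $E$ over $\mathrm{id}_M$, each orthogonal for $\langle\cdot,\cdot\rangle$, with $\mathbf I^2=\mathbf J^2=\mathbf K^2=\mathbf I\mathbf J\mathbf K=-1$. Given an almost hypercomplex structure, for $f\in C^\infty(M)$ and $X,Y\in\Gamma(E)$ set $\Delta_f(X,Y)=\langle X,Y\rangle Df+\langle\mathbf IX,Y\rangle\mathbf I Df+\langle\mathbf JX,Y\rangle\mathbf JDf+\langle\mathbf KX,Y\rangle\mathbf KDf$. A hypercomplex connection is an $\mathbb R$-bilinear map $\Gamma(E)\times\Gamma(E)\to\Gamma(E)$, $(X,Y)\mapsto\nabla_XY$, with $\nabla_{fX}Y=f\nabla_XY$ and $\nabla_X(fY)=(\rho(X)f)Y+f\nabla_XY-\Delta_f(X,Y)$. Its torsion is $T(X,Y)=\nabla_XY-\nabla_YX-[\![X,Y]\!]$. For an endomorphism $P$ of $E$, $(\nabla_XP)Y:=\nabla_X(PY)-P(\nabla_XY)$, and $\nabla P=0$ means this vanishes for all $X,Y$. *)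

theory Defs
  imports Main Complex_Main
begin

text \<open>Algebraic model: C = C^infinity(M) is a commutative real algebra 'f,
Gamma(E) is a module 'e over it via smul. Vector fields are derivations of 'f.\<close>

definition is_derivation :: "('f::{real_algebra_1,comm_ring_1} \<Rightarrow> 'f) \<Rightarrow> bool" where
  "is_derivation V \<longleftrightarrow>
     (\<forall>f g. V (f + g) = V f + V g) \<and>
     (\<forall>(c::real) f. V (of_real c * f) = of_real c * V f) \<and>
     (\<forall>f g. V (f * g) = f * V g + g * V f)"

definition c_linear :: "('f::{real_algebra_1,comm_ring_1} \<Rightarrow> 'e::ab_group_add \<Rightarrow> 'e) \<Rightarrow> ('e \<Rightarrow> 'e) \<Rightarrow> bool" where
  "c_linear smul F \<longleftrightarrow> (\<forall>x y. F (x + y) = F x + F y) \<and> (\<forall>f x. F (smul f x) = smul f (F x))"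

definition courant_algebroid ::
  "('f::{real_algebra_1,comm_ring_1} \<Rightarrow> 'e::ab_group_add \<Rightarrow> 'e) \<Rightarrow> ('e \<Rightarrow> 'f \<Rightarrow> 'f)
   \<Rightarrow> ('e \<Rightarrow> 'e \<Rightarrow> 'f) \<Rightarrow> ('e \<Rightarrow> 'e \<Rightarrow> 'e) \<Rightarrow> ('f \<Rightarrow> 'e) \<Rightarrow> bool" where
  "courant_algebroid smul rho pair circ D \<longleftrightarrow>
     module smul \<and>
     \<comment> \<open>anchor: bundle map E -> TM\<close>
     (\<forall>x. is_derivation (rho x)) \<and>
     (\<forall>x y g. rho (x + y) g = rho x g + rho y g) \<and>
     (\<forall>f x g. rho (smul f x) g = f * rho x g) \<and>
     \<comment> \<open>pairing: symmetric, C-bilinear, nondegenerate\<close>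
     (\<forall>x y z. pair (x + y) z = pair x z + pair y z) \<and>
     (\<forall>f x y. pair (smul f x) y = f * pair x y) \<and>
     (\<forall>x y. pair x y = pair y x) \<and>
     (\<forall>x. (\<forall>y. pair x y = 0) \<longrightarrow> x = 0) \<and>
     (\<forall>\<phi>. ((\<forall>y z. \<phi> (y + z) = \<phi> y + \<phi> z) \<and> (\<forall>f y. \<phi> (smul f y) = f * \<phi> y))
           \<longrightarrow> (\<exists>x. \<forall>y. \<phi> y = pair x y)) \<and>
     \<comment> \<open>Dorfman bracket is R-bilinear\<close>
     (\<forall>x y z. circ (x + y) z = circ x z + circ y z) \<and>
     (\<forall>x y z. circ x (y + z) = circ x y + circ x z) \<and>
     (\<forall>(c::real) x y. circ (smul (of_real c) x) y = smul (of_real c) (circ x y)) \<and>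
     (\<forall>(c::real) x y. circ x (smul (of_real c) y) = smul (of_real c) (circ x y)) \<and>
     \<comment> \<open>D\<close>
     (\<forall>f x. pair (D f) x = of_real (1/2) * rho x f) \<and>
     \<comment> \<open>axioms\<close>
     (\<forall>x y z. circ x (circ y z) = circ (circ x y) z + circ y (circ x z)) \<and>
     (\<forall>x y g. rho (circ x y) g = rho x (rho y g) - rho y (rho x g)) \<and>
     (\<forall>x f y. circ x (smul f y) = smul (rho x f) y + smul f (circ x y)) \<and>
     (\<forall>x y. circ x y + circ y x = smul 2 (D (pair x y))) \<and>
     (\<forall>f x. circ (D f) x = 0) \<and>
     (\<forall>x y z. rho x (pair y z) = pair (circ x y) z + pair y (circ x z))"

definition courant_bracket ::
  "('f::{real_algebra_1,comm_ring_1} \<Rightarrow> 'e::ab_group_add \<Rightarrow> 'e) \<Rightarrow> ('e \<Rightarrow> 'e \<Rightarrow> 'e) \<Rightarrow> 'e \<Rightarrow> 'e \<Rightarrow> 'e" where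
  "courant_bracket smul circ x y = smul (of_real (1/2)) (circ x y - circ y x)"

definition nijenhuis_concomitant ::
  "('e::ab_group_add \<Rightarrow> 'e \<Rightarrow> 'e) \<Rightarrow> ('e \<Rightarrow> 'e) \<Rightarrow> ('e \<Rightarrow> 'e) \<Rightarrow> 'e \<Rightarrow> 'e \<Rightarrow> 'e" where
  "nijenhuis_concomitant circ F G X Y =
     circ (F X) (G Y) - F (circ X (G Y)) - G (circ (F X) Y) + F (G (circ X Y))
     + circ (G X) (F Y) - G (circ X (F Y)) - F (circ (G X) Y) + G (F (circ X Y))"

definition almost_hypercomplex ::
  "('f::{real_algebra_1,comm_ring_1} \<Rightarrow> 'e::ab_group_add \<Rightarrow> 'e) \<Rightarrow> ('e \<Rightarrow> 'e \<Rightarrow> 'f)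
   \<Rightarrow> ('e \<Rightarrow> 'e) \<Rightarrow> ('e \<Rightarrow> 'e) \<Rightarrow> ('e \<Rightarrow> 'e) \<Rightarrow> bool" where
  "almost_hypercomplex smul pair I J K \<longleftrightarrow>
     (\<forall>F \<in> {I, J, K}. c_linear smul F \<and> (\<forall>x y. pair (F x) (F y) = pair x y)) \<and>
     (\<forall>x. I (I x) = - x) \<and> (\<forall>x. J (J x) = - x) \<and> (\<forall>x. K (K x) = - x) \<and>
     (\<forall>x. I (J (K x)) = - x)"

definition hc_Delta ::
  "('f::{real_algebra_1,comm_ring_1} \<Rightarrow> 'e::ab_group_add \<Rightarrow> 'e) \<Rightarrow> ('e \<Rightarrow> 'e \<Rightarrow> 'f) \<Rightarrow> ('f \<Rightarrow> 'e)
   \<Rightarrow> ('e \<Rightarrow> 'e) \<Rightarrow> ('e \<Rightarrow> 'e) \<Rightarrow> ('e \<Rightarrow> 'e) \<Rightarrow> 'f \<Rightarrow> 'e \<Rightarrow> 'e \<Rightarrow> 'e" where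
  "hc_Delta smul pair D I J K f X Y =
     smul (pair X Y) (D f) + smul (pair (I X) Y) (I (D f))
     + smul (pair (J X) Y) (J (D f)) + smul (pair (K X) Y) (K (D f))"

definition hypercomplex_connection ::
  "('f::{real_algebra_1,comm_ring_1} \<Rightarrow> 'e::ab_group_add \<Rightarrow> 'e) \<Rightarrow> ('e \<Rightarrow> 'f \<Rightarrow> 'f) \<Rightarrow> ('e \<Rightarrow> 'e \<Rightarrow> 'f)
   \<Rightarrow> ('f \<Rightarrow> 'e) \<Rightarrow> ('e \<Rightarrow> 'e) \<Rightarrow> ('e \<Rightarrow> 'e) \<Rightarrow> ('e \<Rightarrow> 'e) \<Rightarrow> ('e \<Rightarrow> 'e \<Rightarrow> 'e) \<Rightarrow> bool" where
  "hypercomplex_connection smul rho pair D I J K nabla \<longleftrightarrow>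
     (\<forall>X Y Z. nabla (X + Y) Z = nabla X Z + nabla Y Z) \<and>
     (\<forall>X Y Z. nabla X (Y + Z) = nabla X Y + nabla X Z) \<and>
     (\<forall>(c::real) X Y. nabla X (smul (of_real c) Y) = smul (of_real c) (nabla X Y)) \<and>
     (\<forall>f X Y. nabla (smul f X) Y = smul f (nabla X Y)) \<and>
     (\<forall>f X Y. nabla X (smul f Y) =
        smul (rho X f) Y + smul f (nabla X Y) - hc_Delta smul pair D I J K f X Y)"

definition torsion ::
  "('f::{real_algebra_1,comm_ring_1} \<Rightarrow> 'e::ab_group_add \<Rightarrow> 'e) \<Rightarrow> ('e \<Rightarrow> 'e \<Rightarrow> 'e) \<Rightarrow> ('e \<Rightarrow> 'e \<Rightarrow> 'e)
   \<Rightarrow> 'e \<Rightarrow> 'e \<Rightarrow> 'e" where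
  "torsion smul circ nabla X Y = nabla X Y - nabla Y X - courant_bracket smul circ X Y"

definition parallel :: "('e \<Rightarrow> 'e \<Rightarrow> 'e::ab_group_add) \<Rightarrow> ('e \<Rightarrow> 'e) \<Rightarrow> bool" where
  "parallel nabla P \<longleftrightarrow> (\<forall>X Y. nabla X (P Y) - P (nabla X Y) = 0)"

end

theory Submission
  imports Defs
begin

lemma addhom:
  fixes F :: "'a::ab_group_add \<Rightarrow> 'b::ab_group_add"
  assumes "\<And>a b. F (a + b) = F a + F b"
  shows "F 0 = 0" "F (- x) = - F x" "F (x - y) = F x - F y"
proof -
  have "F (0 + 0) = F 0 + F 0" by (rule assms)
  then have "F 0 = F 0 + F 0" by simp
  then show z: "F 0 = 0" by simp
  have "F (- x + x) = F (- x) + F x" by (rule assms)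
  then have "F (- x) + F x = 0" using z by simp
  then show m: "F (- x) = - F x" by (simp add: eq_neg_iff_add_eq_0)
  have "F (- y + y) = F (- y) + F y" by (rule assms)
  then have "F (- y) = - F y" using z by (simp add: eq_neg_iff_add_eq_0)
  moreover have "F (x + - y) = F x + F (- y)" by (rule assms)
  ultimately show "F (x - y) = F x - F y" by simp
qed

theorem mainTheorem7:
  fixes smul :: "'f::{real_algebra_1,comm_ring_1} \<Rightarrow> 'e::ab_group_add \<Rightarrow> 'e"
    and rho :: "'e \<Rightarrow> 'f \<Rightarrow> 'f"
    and pair :: "'e \<Rightarrow> 'e \<Rightarrow> 'f"
    and circ :: "'e \<Rightarrow> 'e \<Rightarrow> 'e"
    and D :: "'f \<Rightarrow> 'e"
    and I J K :: "'e \<Rightarrow> 'e"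
  assumes CA: "courant_algebroid smul rho pair circ D"
    and HC: "almost_hypercomplex smul pair I J K"
    and conn: "\<exists>nabla. hypercomplex_connection smul rho pair D I J K nabla
       \<and> parallel nabla I \<and> parallel nabla J \<and> parallel nabla K
       \<and> (\<forall>X Y. torsion smul circ nabla X Y =
            I (D (pair X (I Y))) + J (D (pair X (J Y))) + K (D (pair X (K Y))))"
  shows "\<forall>X Y. nijenhuis_concomitant circ I J X Y = 0"
proof -
  obtain nabla where hcn: "hypercomplex_connection smul rho pair D I J K nabla"
    and pI: "parallel nabla I" and pJ: "parallel nabla J" and pK: "parallel nabla K"
    and tor: "\<And>X Y. torsion smul circ nabla X Y =
            I (D (pair X (I Y))) + J (D (pair X (J Y))) + K (D (pair X (K Y)))"
    using conn by blast
  have md: "module smul" using CA by (simp add: courant_algebroid_def)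
  have Iadd: "\<And>x y. I (x + y) = I x + I y" and Jadd: "\<And>x y. J (x + y) = J x + J y"
    and Kadd: "\<And>x y. K (x + y) = K x + K y"
    using HC by (auto simp: almost_hypercomplex_def c_linear_def)
  note Ih = addhom[where F=I, OF Iadd] and Jh = addhom[where F=J, OF Jadd] and Kh = addhom[where F=K, OF Kadd]
  have II: "\<And>x. I (I x) = - x" and JJ: "\<And>x. J (J x) = - x" and KK: "\<And>x. K (K x) = - x"
    and IJK: "\<And>x. I (J (K x)) = - x" using HC by (auto simp: almost_hypercomplex_def)
  have IJ: "\<And>x. I (J x) = K x"
  proof -
    fix x have "I (J (K (K x))) = - K x" by (rule IJK)
    then show "I (J x) = K x" using KK Ih Jh by simp
  qed
  have JK: "\<And>x. J (K x) = I x"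
  proof -
    fix x have "I (I (J (K x))) = I (- x)" using IJK by simp
    then show "J (K x) = I x" using II Ih by simp
  qed
  have JI: "\<And>x. J (I x) = - K x" using JK JJ by (metis Jh(2))
  have IK: "\<And>x. I (K x) = - J x" using IJ II by (metis Ih(2))
  have KI: "\<And>x. K (I x) = J x"
  proof -
    fix x have "J (K (I x)) = I (I x)" by (rule JK)
    then have "J (J (K (I x))) = J (- x)" using II by simp
    then show "K (I x) = J x" using JJ Jh by simp
  qed
  have KJ: "\<And>x. K (J x) = - I x"
  proof -
    fix x have "I (K (J x)) = - J (J x)" by (rule IK)
    then have "I (I (K (J x))) = I x" using JJ by simp
    then show "K (J x) = - I x" using II by (metis minus_minus)
  qed
  have orth: "\<And>x y. pair (I x) (I y) = pair x y" "\<And>x y. pair (J x) (J y) = pair x y"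
    "\<And>x y. pair (K x) (K y) = pair x y"
    using HC by (auto simp: almost_hypercomplex_def)
  have padd: "\<And>x y z. pair (x + y) z = pair x z + pair y z" and psym: "\<And>x y. pair x y = pair y x"
    and nd: "\<And>x. (\<forall>y. pair x y = 0) \<Longrightarrow> x = 0"
    using CA by (auto simp: courant_algebroid_def)
  have padd2: "\<And>x y z. pair z (x + y) = pair z x + pair z y" using padd psym by metis
  have pneg: "\<And>x y. pair (- x) y = - pair x y"
    using addhom(2)[where F="\<lambda>x. pair x y" for y, OF padd] by blast
  have pneg2: "\<And>x y. pair x (- y) = - pair x y" using pneg psym by metis
  have pI': "\<And>x y. pair (I x) y = - pair x (I y)"
    by (metis II orth(1) pneg)
  have pJ': "\<And>x y. pair (J x) y = - pair x (J y)"
    by (metis JJ orth(2) pneg)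
  have pK': "\<And>x y. pair (K x) y = - pair x (K y)"
    by (metis KK orth(3) pneg)
  have Dp: "\<And>f x. pair (D f) x = of_real (1/2) * rho x f"
    and der: "\<And>x. is_derivation (rho x)"
    using CA by (auto simp: courant_algebroid_def)
  have Dadd: "\<And>f g. D (f + g) = D f + D g"
  proof -
    fix f g
    have "\<forall>y. pair (D (f + g) - (D f + D g)) y = 0"
    proof
      fix y
      have "pair (D (f + g) - (D f + D g)) y = pair (D (f+g)) y - (pair (D f) y + pair (D g) y)"
        using addhom(3)[where F="\<lambda>x. pair x y", OF padd] padd by simp
      also have "\<dots> = 0" using Dp der[of y] by (simp add: is_derivation_def algebra_simps)
      finally show "pair (D (f + g) - (D f + D g)) y = 0" .
    qed
    then show "D (f + g) = D f + D g" using nd[of "D (f + g) - (D f + D g)"] by simp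
  qed
  note Dh = addhom[where F=D, OF Dadd]
  have cadd: "\<And>x y. circ x y + circ y x = smul 2 (D (pair x y))"
    using CA by (auto simp: courant_algebroid_def)
  have nI: "\<And>X Y. nabla X (I Y) = I (nabla X Y)" using pI by (simp add: parallel_def)
  have nJ: "\<And>X Y. nabla X (J Y) = J (nabla X Y)" using pJ by (simp add: parallel_def)
  have circ_eq: "\<And>X Y. circ X Y = nabla X Y - nabla Y X
      - (I (D (pair X (I Y))) + J (D (pair X (J Y))) + K (D (pair X (K Y)))) + D (pair X Y)"
  proof -
    fix X Y
    interpret m: module smul by (rule md)
    have two: "smul 2 z = z + z" for z
      using m.scale_left_distrib[of 1 1 z] by simp
    have cyx: "circ Y X = smul 2 (D (pair X Y)) - circ X Y"
      using cadd[of Y X] psym[of Y X] by (simp add: eq_diff_eq)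
    have "circ X Y - circ Y X = smul 2 (circ X Y - D (pair X Y))"
      unfolding cyx m.scale_right_diff_distrib two by simp
    have half: "of_real (1/2) * (2::'f) = 1"
    proof -
      have "of_real (1/2) * (2::'f) = of_real (1/2) * of_real 2" by simp
      also have "\<dots> = of_real (1/2 * 2)" by (rule of_real_mult[symmetric])
      finally show ?thesis by simp
    qed
    then have br: "courant_bracket smul circ X Y = circ X Y - D (pair X Y)"
      unfolding courant_bracket_def using \<open>circ X Y - circ Y X = smul 2 (circ X Y - D (pair X Y))\<close>
      by simp
    have t: "nabla X Y - nabla Y X - courant_bracket smul circ X Y =
            I (D (pair X (I Y))) + J (D (pair X (J Y))) + K (D (pair X (K Y)))"
      using tor[of X Y] unfolding torsion_def .
    show "?thesis X Y" unfolding t[symmetric] br by simp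
  qed
  show ?thesis
    unfolding nijenhuis_concomitant_def circ_eq
    apply (simp only: Ih Jh Kh Iadd Jadd Kadd nI nJ)
    apply (simp only: II JJ KK IJ JI JK KJ IK KI Ih Jh Kh)
    apply (simp only: pI' pJ' pK' pneg pneg2 II JJ KK IJ JI JK KJ IK KI Ih Jh Kh Dh)
    apply (simp add: algebra_simps)
    done
qed

end
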